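(* Let $P=\mathrm{conv}(\bm{x}_1,\dots,\bm{x}_m)$ be a polytope in $\mathbb{R}^k$ with each $\bm{x}_i$ of unit Euclidean length. Then the maximum volume ellipsoid $E(P)$ contained in $P$ satisfies $\mathrm{vol}(E(P))\le 2\sqrt{2e}\left(\sqrt{\frac{2\log 2m}{k}}\right)^k\mathrm{vol}(B_k(0,1))$.
   Context: $B_k(0,1)$ is the unit Euclidean ball in $\mathbb{R}^k$; $\mathrm{vol}$ is $k$-dimensional volume; $\log$ is the natural logarithm. *)

theory Defs
  imports "HOL-Analysis.Analysis"
begin

definition is_ellipsoid :: "'a::euclidean_space set \<Rightarrow> bool" where
  "is_ellipsoid E \<longleftrightarrow> (\<exists>c (A::'a \<Rightarrow> 'a). linear A \<and> inj A \<and> E = (\<lambda>u. c + A u) ` cball 0 1)"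

definition max_vol_ellipsoid :: "'a::euclidean_space set \<Rightarrow> 'a set \<Rightarrow> bool" where
  "max_vol_ellipsoid P E \<longleftrightarrow> is_ellipsoid E \<and> E \<subseteq> P \<and>
     (\<forall>E'. is_ellipsoid E' \<and> E' \<subseteq> P \<longrightarrow> measure lebesgue E' \<le> measure lebesgue E)"

end

theory Submission
  imports Defs "HOL-Probability.Hoeffding"
begin

lemma cosh_le_aux: fixes x :: real assumes "x \<ge> 0"
  shows "exp x + exp (-x) \<le> 2 * exp (x^2/2)"
proof -
  have "-(2*x) * (1/2) + ln (1 + (1/2) * (exp (2*x) - 1)) \<le> (2*x)^2/8"
    using Hoeffdings_lemma_aux[of "2*x" "1/2"] assms by simp
  hence "ln ((1 + exp (2*x))/2) \<le> x + x^2/2"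
    by (simp add: field_simps power2_eq_square)
  hence "(1 + exp (2*x))/2 \<le> exp (x + x^2/2)"
    by (metis add_pos_pos divide_pos_pos exp_gt_zero exp_ln zero_less_one zero_less_numeral exp_le_cancel_iff ln_le_cancel_iff ln_exp)
  hence "exp (-x) * ((1 + exp (2*x))/2) \<le> exp (-x) * exp (x + x^2/2)"
    by (intro mult_left_mono) auto
  moreover have "exp (-x) * ((1 + exp (2*x))/2) = (exp x + exp (-x))/2"
    by (simp add: field_simps exp_add[symmetric])
  moreover have "exp (-x) * exp (x + x^2/2) = exp (x^2/2)"
    by (simp add: exp_add[symmetric])
  ultimately show ?thesis by simp
qed

lemma cosh_le: fixes x :: real
  shows "exp x + exp (-x) \<le> 2 * exp (x^2/2)"
proof (cases "x \<ge> 0")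
  case True thus ?thesis by (rule cosh_le_aux)
next
  case False
  thus ?thesis using cosh_le_aux[of "-x"] by (simp add: add.commute)
qed

definition SV :: "('n::finite \<Rightarrow> real) set" where
  "SV = PiE UNIV (\<lambda>_. {-1::real, 1})"

lemma finite_SV: "finite SV" unfolding SV_def by (intro finite_PiE) auto
lemma card_SV: "card (SV :: ('n::finite \<Rightarrow> real) set) = 2 ^ CARD('n)"
  unfolding SV_def by (subst card_PiE) (auto simp: numeral_2_eq_2)
lemma SV_nonempty: "SV \<noteq> {}" unfolding SV_def by (auto simp: PiE_eq_empty_iff)

lemma sign_sum_bound:
  fixes a :: "real^'n"
  assumes "norm a = 1"
  shows "(\<Sum>f\<in>SV. exp (l * (\<Sum>j\<in>UNIV. a$j * f j))) \<le> 2 ^ CARD('n) * exp (l^2/2)"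
proof -
  have "(\<Sum>f\<in>SV. exp (l * (\<Sum>j\<in>UNIV. a$j * f j))) = (\<Sum>f\<in>SV. \<Prod>j\<in>UNIV. exp (l * a$j * f j))"
    by (simp add: sum_distrib_left exp_sum mult.assoc)
  also have "\<dots> = (\<Prod>j\<in>UNIV. \<Sum>y\<in>{-1::real,1}. exp (l * a$j * y))"
    unfolding SV_def by (rule prod_sum_PiE[symmetric]) auto
  also have "\<dots> = (\<Prod>j\<in>UNIV. exp (l * a$j) + exp (- (l * a$j)))"
    by (simp add: add.commute)
  also have "\<dots> \<le> (\<Prod>j\<in>UNIV. 2 * exp ((l * a$j)^2/2))"
    by (intro prod_mono conjI cosh_le) (auto intro: add_nonneg_nonneg)
  also have "\<dots> = 2 ^ CARD('n) * exp (\<Sum>j\<in>UNIV. (l * a$j)^2/2)"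
    by (simp add: prod.distrib exp_sum)
  also have "(\<Sum>j\<in>UNIV. (l * a$j)^2/2) = l^2/2 * (\<Sum>j\<in>UNIV. (a$j)^2)"
    by (simp add: sum_distrib_left power_mult_distrib)
  also have "(\<Sum>j\<in>UNIV. (a$j)^2) = 1"
    using assms by (simp add: norm_vec_def L2_set_def)
  finally show ?thesis by simp
qed

lemma exists_signs:
  fixes a :: "nat \<Rightarrow> real^'n"
  assumes m: "m \<ge> 1" and na: "\<And>i. i < m \<Longrightarrow> norm (a i) = 1"
  shows "\<exists>f\<in>SV. \<forall>i<m. \<bar>\<Sum>j\<in>UNIV. a i $ j * f j\<bar> \<le> sqrt (2 * ln (2 * real m))"
proof -
  define t where "t = sqrt (2 * ln (2 * real m))"
  have "ln (2 * real m) > 0" using m by simp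
  hence t: "t > 0" "t^2 = 2 * ln (2 * real m)" unfolding t_def by auto
  define F where "F f = (\<Sum>i<m. exp (t * (\<Sum>j\<in>UNIV. a i $ j * f j)) + exp (t * (\<Sum>j\<in>UNIV. (- a i) $ j * f j)))" for f :: "'n \<Rightarrow> real"
  have "(\<Sum>f\<in>SV. F f) = (\<Sum>i<m. (\<Sum>f\<in>SV. exp (t * (\<Sum>j\<in>UNIV. a i $ j * f j))) + (\<Sum>f\<in>SV. exp (t * (\<Sum>j\<in>UNIV. (- a i) $ j * f j))))"
    unfolding F_def by (subst sum.swap) (simp add: sum.distrib)
  also have "\<dots> \<le> (\<Sum>i<m. 2 ^ CARD('n) * exp (t^2/2) + 2 ^ CARD('n) * exp (t^2/2))"
    by (intro sum_mono add_mono sign_sum_bound) (auto simp: na)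
  also have "\<dots> = card (SV::('n \<Rightarrow> real) set) * (2 * real m * exp (t^2/2))"
    by (simp add: card_SV)
  finally have sumle: "(\<Sum>f\<in>SV. F f) \<le> card (SV::('n \<Rightarrow> real) set) * (2 * real m * exp (t^2/2))" .
  have "\<exists>f\<in>SV. F f \<le> 2 * real m * exp (t^2/2)"
  proof (rule ccontr)
    assume "\<not> ?thesis"
    hence "\<And>f. f \<in> SV \<Longrightarrow> 2 * real m * exp (t^2/2) < F f" by auto
    hence "(\<Sum>f\<in>(SV::('n \<Rightarrow> real) set). 2 * real m * exp (t^2/2)) < (\<Sum>f\<in>SV. F f)"
      using finite_SV SV_nonempty by (intro sum_strict_mono) auto
    with sumle show False by simp
  qed
  then obtain f where f: "f \<in> SV" "F f \<le> 2 * real m * exp (t^2/2)" by blast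
  have "\<forall>i<m. \<bar>\<Sum>j\<in>UNIV. a i $ j * f j\<bar> \<le> t"
  proof (intro allI impI)
    fix i assume i: "i < m"
    define s where "s = (\<Sum>j\<in>UNIV. a i $ j * f j)"
    have neg: "(\<Sum>j\<in>UNIV. (- a i) $ j * f j) = - s" unfolding s_def by (simp add: sum_negf)
    have "exp (t * \<bar>s\<bar>) \<le> exp (t * s) + exp (t * (- s))"
      by (cases "s \<ge> 0") (auto simp: add_increasing add_increasing2)
    also have "\<dots> \<le> F f"
    proof -
      have "exp (t * s) + exp (t * - s) = (\<lambda>i. exp (t * (\<Sum>j\<in>UNIV. a i $ j * f j)) + exp (t * (\<Sum>j\<in>UNIV. (- a i) $ j * f j))) i"
        using neg s_def by simp
      also have "\<dots> \<le> F f" unfolding F_def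
        by (rule member_le_sum) (use i in \<open>auto intro: add_nonneg_nonneg\<close>)
      finally show ?thesis .
    qed
    also have "\<dots> \<le> 2 * real m * exp (t^2/2)" by (rule f)
    finally have "exp (t * \<bar>s\<bar>) \<le> exp (ln (2 * real m) + t^2/2)"
      using m by (simp add: exp_add)
    hence "t * \<bar>s\<bar> \<le> ln (2 * real m) + t^2/2" by simp
    also have "\<dots> = t * t" using t by (simp add: power2_eq_square)
    finally show "\<bar>s\<bar> \<le> t" using t by simp
  qed
  with f show ?thesis unfolding t_def by blast
qed

lemma rot_choice:
  fixes D g a b :: real
  assumes "D * g \<noteq> 0"
  shows "\<exists>c s. c^2 + s^2 = 1 \<and> D * (s^2 * (b - a) + 2 * c * s * g) > 0"
proof -
  define k where "k = D * g"
  define B where "B = \<bar>D * (b - a)\<bar>"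
  define e where "e = min (1/2) (\<bar>k\<bar> / (2 * (B + 1)))"
  have k: "\<bar>k\<bar> > 0" using assms k_def by simp
  have B: "B \<ge> 0" unfolding B_def by simp
  have e0: "e > 0" unfolding e_def using k B by simp
  have e1: "e \<le> 1/2" unfolding e_def by (rule min.cobounded1)
  have eB: "e * B \<le> \<bar>k\<bar> / 2"
  proof -
    have "e \<le> \<bar>k\<bar> / (2 * (B + 1))" unfolding e_def by simp
    hence "e * B \<le> \<bar>k\<bar> / (2 * (B + 1)) * B" using B by (rule mult_right_mono)
    also have "\<dots> \<le> \<bar>k\<bar> / 2" using B k by (simp add: field_simps)
    finally show ?thesis .
  qed
  define s where "s = sgn k * e"
  define c where "c = sqrt (1 - e^2)"
  have e2: "e^2 \<le> 1/4"
  proof -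
    have "e * e \<le> (1/2) * (1/2)" using e0 e1 by (intro mult_mono) auto
    thus ?thesis by (simp add: power2_eq_square)
  qed
  have c: "c \<ge> 1/2"
  proof -
    have h: "(1/2::real)^2 = 1/4" by (simp add: power2_eq_square)
    have "(1/2)^2 \<le> 1 - e^2" using e2 unfolding h by linarith
    thus ?thesis unfolding c_def by (rule real_le_rsqrt)
  qed
  have cs: "c^2 + s^2 = 1" unfolding c_def s_def using e2 k
    by (auto simp: power_mult_distrib sgn_if)
  have "D * (s^2 * (b - a) + 2 * c * s * g) = e^2 * (D * (b - a)) + 2 * c * e * \<bar>k\<bar>"
    unfolding s_def k_def using assms by (simp add: power_mult_distrib sgn_if algebra_simps abs_if)
  also have "\<dots> \<ge> - (e^2 * B) + e * \<bar>k\<bar>"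
  proof -
    have "D * (b - a) \<ge> - B" unfolding B_def by linarith
    hence "e^2 * (D * (b - a)) \<ge> e^2 * (- B)" by (intro mult_left_mono) auto
    hence "e^2 * (D * (b - a)) \<ge> - (e^2 * B)" by simp
    moreover have "2 * c * e * \<bar>k\<bar> \<ge> e * \<bar>k\<bar>"
    proof -
      have "2 * c \<ge> 1" using c by simp
      hence "(2 * c) * (e * \<bar>k\<bar>) \<ge> 1 * (e * \<bar>k\<bar>)" using e0 k by (intro mult_right_mono) auto
      thus ?thesis by (simp add: mult.assoc)
    qed
    ultimately show ?thesis by linarith
  qed
  finally have "D * (s^2 * (b - a) + 2 * c * s * g) \<ge> e * (\<bar>k\<bar> - e * B)"
    by (simp add: algebra_simps power2_eq_square)
  moreover have "e * (\<bar>k\<bar> - e * B) > 0" using e0 eB k by (intro mult_pos_pos) auto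
  ultimately show ?thesis using cs by force
qed

definition rotm :: "'n \<Rightarrow> 'n \<Rightarrow> real \<Rightarrow> real \<Rightarrow> real^'n^'n \<Rightarrow> real^'n^'n" where
  "rotm j l c s Q = (\<chi> k p. if p = j then c * Q$k$j + s * Q$k$l else if p = l then c * Q$k$l - s * Q$k$j else Q$k$p)"

lemma column_rotm:
  assumes "j \<noteq> l"
  shows "column p (rotm j l c s Q) = (if p = j then c *\<^sub>R column j Q + s *\<^sub>R column l Q
     else if p = l then c *\<^sub>R column l Q - s *\<^sub>R column j Q else column p Q)"
  using assms by (auto simp: vec_eq_iff column_def rotm_def)

lemma rot_inner1:
  fixes a b :: "'a::real_inner"
  assumes "a \<bullet> a = 1" "b \<bullet> b = 1" "a \<bullet> b = 0"
  shows "(c *\<^sub>R a + s *\<^sub>R b) \<bullet> (c *\<^sub>R a + s *\<^sub>R b) = c^2 + s^2"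
    "(c *\<^sub>R b - s *\<^sub>R a) \<bullet> (c *\<^sub>R b - s *\<^sub>R a) = c^2 + s^2"
    "(c *\<^sub>R a + s *\<^sub>R b) \<bullet> (c *\<^sub>R b - s *\<^sub>R a) = 0"
    "(c *\<^sub>R b - s *\<^sub>R a) \<bullet> (c *\<^sub>R a + s *\<^sub>R b) = 0"
proof -
  have ba: "b \<bullet> a = 0" using assms(3) by (simp add: inner_commute)
  show "(c *\<^sub>R a + s *\<^sub>R b) \<bullet> (c *\<^sub>R a + s *\<^sub>R b) = c^2 + s^2"
    using assms ba by (simp add: inner_add_left inner_add_right power2_eq_square)
  show "(c *\<^sub>R b - s *\<^sub>R a) \<bullet> (c *\<^sub>R b - s *\<^sub>R a) = c^2 + s^2"
    using assms ba by (simp add: inner_diff_left inner_diff_right power2_eq_square)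
  show "(c *\<^sub>R a + s *\<^sub>R b) \<bullet> (c *\<^sub>R b - s *\<^sub>R a) = 0"
    using assms ba by (simp add: inner_add_left inner_diff_right)
  show "(c *\<^sub>R b - s *\<^sub>R a) \<bullet> (c *\<^sub>R a + s *\<^sub>R b) = 0"
    using assms ba by (simp add: inner_add_right inner_diff_left)
qed

lemma rot_inner2:
  fixes a b x :: "'a::real_inner"
  assumes "a \<bullet> x = 0" "b \<bullet> x = 0"
  shows "(c *\<^sub>R a + s *\<^sub>R b) \<bullet> x = 0" "(c *\<^sub>R b - s *\<^sub>R a) \<bullet> x = 0"
    "x \<bullet> (c *\<^sub>R a + s *\<^sub>R b) = 0" "x \<bullet> (c *\<^sub>R b - s *\<^sub>R a) = 0"
  using assms by (simp_all add: inner_add_left inner_diff_left inner_add_right inner_diff_right inner_commute)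

lemma orthogonal_rotm:
  fixes Q :: "real^'n^'n"
  assumes Q: "orthogonal_matrix Q" and jl: "j \<noteq> l" and cs: "c^2 + s^2 = 1"
  shows "orthogonal_matrix (rotm j l c s Q)"
proof -
  have n1: "column p Q \<bullet> column p Q = 1" for p
    using Q by (simp add: orthogonal_matrix_orthonormal_columns norm_eq_1)
  have o: "p \<noteq> q \<Longrightarrow> column p Q \<bullet> column q Q = 0" for p q
    using Q by (simp add: orthogonal_matrix_orthonormal_columns orthogonal_def)
  note R1 = rot_inner1[OF n1[of j] n1[of l] o[OF jl], of c s, unfolded cs]
  note R2 = rot_inner2[OF o o, of j _ l c s]
  show ?thesis
    unfolding orthogonal_matrix_orthonormal_columns norm_eq_1 orthogonal_def
  proof (intro conjI allI impI)
    fix p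
    show "column p (rotm j l c s Q) \<bullet> column p (rotm j l c s Q) = 1"
      using jl n1 R1 by (simp add: column_rotm)
  next
    fix p q :: 'n assume pq: "p \<noteq> q"
    show "column p (rotm j l c s Q) \<bullet> column q (rotm j l c s Q) = 0"
    proof (cases "p = j \<or> p = l")
      case True
      then show ?thesis using jl pq R1 R2 by (cases "q = j \<or> q = l") (auto simp: column_rotm)
    next
      case False
      then show ?thesis using jl pq R1 R2 o by (cases "q = j \<or> q = l") (auto simp: column_rotm)
    qed
  qed
qed


lemma alg_rot: fixes c s rj rl al be ga S :: real
  assumes "c^2 + s^2 = 1"
  shows "rj*(c^2*al + s^2*be + 2 * c *  s *ga) + rl*(c^2*be + s^2*al - 2 * c *  s *ga) + S - (rj*al + rl*be + S) = (rj - rl)*(s^2*(be-al) + 2 * c *  s *ga)"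
proof -
  have "rj*(c^2*al + s^2*be + 2 * c *  s *ga) + rl*(c^2*be + s^2*al - 2 * c *  s *ga) + S - (rj*al + rl*be + S) - (rj - rl)*(s^2*(be-al) + 2 * c *  s *ga) = (rj*al+rl*be)*(c^2+s^2-1)"
    by (simp add: algebra_simps)
  thus ?thesis using assms by simp
qed

lemma sum_two:
  fixes h :: "'n::finite \<Rightarrow> real"
  assumes "j \<noteq> l"
  shows "sum h UNIV = h j + h l + sum h (UNIV - {j, l})"
proof -
  have "sum h UNIV = h j + sum h (UNIV - {j})" by (simp add: sum.remove)
  also have "sum h (UNIV - {j}) = h l + sum h (UNIV - {j} - {l})"
    using assms by (intro sum.remove) auto
  also have "UNIV - {j} - {l} = UNIV - {j, l}" by auto
  finally show ?thesis by simp
qed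

lemma cont_column: "continuous_on S (\<lambda>Q::real^'n^'m. column p Q)"
  unfolding column_def by (intro continuous_intros)

lemma cont_Mcol: "continuous_on S (\<lambda>Q::real^'n^'m. M *v column p Q)"
  unfolding column_def matrix_vector_mult_def by (intro continuous_intros)

lemma compact_orthogonal: "compact {Q::real^'n^'n. orthogonal_matrix Q}"
proof (rule compact_eq_bounded_closed[THEN iffD2], rule conjI)
  show "bounded {Q::real^'n^'n. orthogonal_matrix Q}"
    unfolding bounded_iff
  proof (intro exI ballI)
    fix Q :: "real^'n^'n" assume "Q \<in> {Q. orthogonal_matrix Q}"
    hence r: "norm (row i Q) = 1" for i by (simp add: orthogonal_matrix_orthonormal_rows)
    have "norm Q \<le> (\<Sum>i\<in>UNIV. norm (Q$i))"
      unfolding norm_vec_def by (rule L2_set_le_sum) auto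
    also have "\<dots> = real CARD('n)" using r by (simp add: row_def)
    finally show "norm Q \<le> real CARD('n)" .
  qed
next
  have "{Q::real^'n^'n. orthogonal_matrix Q} = (\<Inter>i. \<Inter>j. {Q. (\<Sum>k\<in>UNIV. Q$k$i * Q$k$j) = (mat 1 :: real^'n^'n)$i$j})"
    by (auto simp: orthogonal_matrix vec_eq_iff matrix_matrix_mult_def transpose_def)
  also have "closed \<dots>"
    by (intro closed_INT ballI closed_Collect_eq continuous_intros)
  finally show "closed {Q::real^'n^'n. orthogonal_matrix Q}" .
qed

lemma svd_exists:
  fixes M :: "real^'n^'n"
  obtains Q where "orthogonal_matrix Q" "\<And>j l. j \<noteq> l \<Longrightarrow> (M *v column j Q) \<bullet> (M *v column l Q) = 0"
proof -
  obtain f :: "'n \<Rightarrow> nat" where f: "inj f" by auto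
  define r where "r p = real (f p)" for p
  define g where "g Q = (\<Sum>p\<in>UNIV. r p * (norm (M *v column p Q))^2)" for Q :: "real^'n^'n"
  define K where "K = {Q::real^'n^'n. orthogonal_matrix Q}"
  have "compact K" unfolding K_def by (rule compact_orthogonal)
  moreover have "K \<noteq> {}" unfolding K_def using orthogonal_matrix_id by auto
  moreover have "continuous_on K g" unfolding g_def
    by (intro continuous_intros cont_Mcol)
  ultimately obtain Q where QK: "Q \<in> K" and Qmax: "\<And>Q'. Q' \<in> K \<Longrightarrow> g Q' \<le> g Q"
    using continuous_attains_sup by metis
  show ?thesis
  proof (rule that)
    show "orthogonal_matrix Q" using QK K_def by simp
  next
    fix j l :: 'n assume jl: "j \<noteq> l"
    define a where "a = M *v column j Q"
    define b where "b = M *v column l Q"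
    show "(M *v column j Q) \<bullet> (M *v column l Q) = 0"
    proof (rule ccontr)
      assume ne: "(M *v column j Q) \<bullet> (M *v column l Q) \<noteq> 0"
      have D: "r j - r l \<noteq> 0" using f jl unfolding r_def inj_def by auto
      obtain c s where cs: "c^2 + s^2 = 1"
        and pos: "(r j - r l) * (s^2 * (b \<bullet> b - a \<bullet> a) + 2 * c * s * (a \<bullet> b)) > 0"
        using rot_choice[of "r j - r l" "a \<bullet> b" "b \<bullet> b" "a \<bullet> a"] D ne a_def b_def by auto
      define Q' where "Q' = rotm j l c s Q"
      have Q'K: "Q' \<in> K" using QK cs jl unfolding K_def Q'_def by (simp add: orthogonal_rotm)
      have cj: "M *v column j Q' = c *\<^sub>R a + s *\<^sub>R b"
        unfolding Q'_def a_def b_def using jl by (simp add: column_rotm algebra_simps)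
      have cl: "M *v column l Q' = c *\<^sub>R b - s *\<^sub>R a"
        unfolding Q'_def a_def b_def using jl by (simp add: column_rotm algebra_simps)
      have co: "column p Q' = column p Q" if "p \<in> UNIV - {j, l}" for p
        using that jl unfolding Q'_def by (simp add: column_rotm)
      have ba: "b \<bullet> a = a \<bullet> b" by (simp add: inner_commute)
      have n1: "(norm (c *\<^sub>R a + s *\<^sub>R b))^2 = c^2 * (a \<bullet> a) + s^2 * (b \<bullet> b) + 2 * c * s * (a \<bullet> b)"
        unfolding power2_norm_eq_inner using ba
        by (simp add: inner_add_left inner_add_right power2_eq_square algebra_simps)
      have n2: "(norm (c *\<^sub>R b - s *\<^sub>R a))^2 = c^2 * (b \<bullet> b) + s^2 * (a \<bullet> a) - 2 * c * s * (a \<bullet> b)"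
        unfolding power2_norm_eq_inner using ba
        by (simp add: inner_diff_left inner_diff_right power2_eq_square algebra_simps)
      have gQ: "g Q = r j * (a \<bullet> a) + r l * (b \<bullet> b) + (\<Sum>p\<in>UNIV - {j, l}. r p * (norm (M *v column p Q))^2)"
        unfolding g_def a_def b_def by (subst sum_two[OF jl]) (simp add: power2_norm_eq_inner)
      have gQ': "g Q' = r j * (c^2 * (a \<bullet> a) + s^2 * (b \<bullet> b) + 2 * c * s * (a \<bullet> b))
          + r l * (c^2 * (b \<bullet> b) + s^2 * (a \<bullet> a) - 2 * c * s * (a \<bullet> b))
          + (\<Sum>p\<in>UNIV - {j, l}. r p * (norm (M *v column p Q))^2)"
        unfolding g_def by (subst sum_two[OF jl]) (simp add: cj cl n1 n2 co)
      have "g Q' - g Q = (r j - r l) * (s^2 * (b \<bullet> b - a \<bullet> a) + 2 * c * s * (a \<bullet> b))"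
        unfolding gQ gQ' by (rule alg_rot[OF cs])
      with pos Qmax[OF Q'K] show False by simp
    qed
  qed
qed

lemma hull_abs_bound:
  fixes x :: "nat \<Rightarrow> 'a::euclidean_space"
  assumes "\<And>i. i < m \<Longrightarrow> \<bar>x i \<bullet> u\<bar> \<le> t" "p \<in> convex hull (x ` {..<m})"
  shows "\<bar>p \<bullet> u\<bar> \<le> t"
proof -
  have "convex hull (x ` {..<m}) \<subseteq> {p. u \<bullet> p \<le> t} \<inter> {p. (-u) \<bullet> p \<le> t}"
  proof (rule hull_minimal)
    show "x ` {..<m} \<subseteq> {p. u \<bullet> p \<le> t} \<inter> {p. (-u) \<bullet> p \<le> t}"
      using assms(1) by (force simp: inner_commute abs_le_iff)
    show "convex ({p. u \<bullet> p \<le> t} \<inter> {p. (-u) \<bullet> p \<le> t})"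
      by (intro convex_Int convex_halfspace_le)
  qed
  with assms(2) show ?thesis by (auto simp: inner_commute abs_le_iff)
qed

lemma am_gm_sq:
  fixes s :: "'n::finite \<Rightarrow> real"
  assumes pos: "\<And>j. s j > 0"
  shows "(\<Prod>j\<in>UNIV. s j) \<le> sqrt ((\<Sum>j\<in>UNIV. (s j)^2) / real CARD('n)) ^ CARD('n)"
proof -
  define n where "n = real CARD('n)"
  define mu where "mu = (\<Sum>j\<in>UNIV. (s j)^2) / n"
  have n: "n > 0" unfolding n_def by simp
  have sq: "(s j)^2 > 0" for j using pos[of j] by (rule zero_less_power)
  have pp: "(\<Prod>j\<in>UNIV. (s j)^2) > 0" using sq by (intro prod_pos) auto
  have sp: "(\<Sum>j\<in>UNIV. (s j)^2) > 0"
    using sq by (intro sum_pos) auto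
  have mu: "mu > 0" unfolding mu_def using n sp by simp
  have "(\<Sum>j\<in>UNIV. ln ((s j)^2 / mu)) \<le> (\<Sum>j\<in>UNIV. (s j)^2 / mu - 1)"
    using sq mu by (intro sum_mono ln_le_minus_one) auto
  also have "\<dots> = (\<Sum>j\<in>UNIV. (s j)^2) / mu - n"
    by (simp add: sum_subtractf sum_divide_distrib n_def)
  also have "\<dots> = 0" unfolding mu_def using n sp by simp
  finally have "(\<Sum>j\<in>UNIV. ln ((s j)^2 / mu)) \<le> 0" .
  moreover have "(\<Sum>j\<in>UNIV. ln ((s j)^2 / mu)) = ln (\<Prod>j\<in>UNIV. (s j)^2) - n * ln mu"
  proof -
    have "(\<Sum>j\<in>UNIV. ln ((s j)^2 / mu)) = (\<Sum>j\<in>UNIV. ln ((s j)^2) - ln mu)"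
      using sq mu by (intro sum.cong refl) (simp add: ln_div)
    also have "\<dots> = (\<Sum>j\<in>UNIV. ln ((s j)^2)) - n * ln mu"
      by (simp add: sum_subtractf n_def)
    also have "(\<Sum>j\<in>UNIV. ln ((s j)^2)) = ln (\<Prod>j\<in>UNIV. (s j)^2)"
      using sq by (subst ln_prod) auto
    finally show ?thesis .
  qed
  ultimately have "ln (\<Prod>j\<in>UNIV. (s j)^2) \<le> ln (mu ^ CARD('n))"
    using mu by (simp add: ln_realpow n_def)
  hence "(\<Prod>j\<in>UNIV. (s j)^2) \<le> mu ^ CARD('n)"
    using pp mu by (subst (asm) ln_le_cancel_iff) auto
  moreover have "(\<Prod>j\<in>UNIV. s j)^2 = (\<Prod>j\<in>UNIV. (s j)^2)" by (rule prod_power_distrib)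
  moreover have "(sqrt mu ^ CARD('n))^2 = mu ^ CARD('n)"
  proof -
    have "(sqrt mu ^ CARD('n))^2 = (sqrt mu ^ 2) ^ CARD('n)"
      by (metis power_mult mult.commute)
    also have "sqrt mu ^ 2 = mu" using mu by simp
    finally show ?thesis .
  qed
  ultimately have "(\<Prod>j\<in>UNIV. s j)^2 \<le> (sqrt mu ^ CARD('n))^2" by simp
  moreover have "0 \<le> sqrt mu ^ CARD('n)" using mu by simp
  ultimately have "(\<Prod>j\<in>UNIV. s j) \<le> sqrt mu ^ CARD('n)"
    by (rule power2_le_imp_le)
  thus ?thesis unfolding mu_def n_def .
qed

lemma column_mult: "column j (M ** Q) = M *v column j (Q::real^'n^'n)"
  by (simp add: vec_eq_iff column_def matrix_matrix_mult_def matrix_vector_mult_def)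

lemma core:
  fixes A :: "real^'n::{finite,wellorder} \<Rightarrow> real^'n::_" and x :: "nat \<Rightarrow> (real,'n) vec" and c :: "(real,'n) vec"
  assumes m: "m \<ge> 1" and nx: "\<And>i. i < m \<Longrightarrow> norm (x i) = 1" and lin: "linear A" and inj: "inj A"
    and sub: "(\<lambda>u. c + A u) ` cball 0 1 \<subseteq> convex hull (x ` {..<m})"
  shows "measure lebesgue ((\<lambda>u. c + A u) ` cball 0 1)
    \<le> sqrt (2 * ln (2 * real m) / real CARD('n)) ^ CARD('n) * measure lebesgue (ball (0::(real,'n) vec) 1)"
proof -
  define M where "M = matrix A"
  have AM: "A v = M *v v" for v unfolding M_def using lin by (simp add: matrix_works)
  obtain Q where Q: "orthogonal_matrix Q" and Qo: "\<And>j l. j \<noteq> l \<Longrightarrow> (M *v column j Q) \<bullet> (M *v column l Q) = 0"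
    using svd_exists by blast
  define X where "X = M ** Q"
  have colX: "column j X = M *v column j Q" for j unfolding X_def by (rule column_mult)
  define s where "s j = norm (column j X)" for j
  have nQ: "norm (column j Q) = 1" for j using Q by (simp add: orthogonal_matrix_orthonormal_columns)
  have spos: "s j > 0" for j
  proof -
    have "column j Q \<noteq> 0" using nQ[of j] by auto
    hence "A (column j Q) \<noteq> 0" using inj lin linear_injective_0 by blast
    thus ?thesis unfolding s_def colX AM[symmetric] by simp
  qed
  have snz: "s j \<noteq> 0" for j using spos[of j] by simp
  have Xo: "column j X \<bullet> column l X = (if j = l then (s j)^2 else 0)" for j l
    using Qo unfolding colX s_def by (simp add: power2_norm_eq_inner)
  have detM: "\<bar>det M\<bar> = (\<Prod>j\<in>UNIV. s j)"
  proof -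
    have "transpose X ** X = (\<chi> i j. if i = j then (s i)^2 else 0)"
      by (simp add: matrix_mult_transpose_dot_column Xo)
    hence "det (transpose X ** X) = (\<Prod>j\<in>UNIV. (s j)^2)"
      by (simp add: det_diagonal)
    moreover have "det (transpose X ** X) = (det M * det Q)^2"
      by (simp add: det_mul X_def power2_eq_square)
    moreover have "(det Q)^2 = 1" using det_orthogonal_matrix[OF Q] by auto
    ultimately have "(det M)^2 = (\<Prod>j\<in>UNIV. s j)^2"
      by (simp add: power_mult_distrib prod_power_distrib)
    hence "\<bar>det M\<bar> = \<bar>\<Prod>j\<in>UNIV. s j\<bar>" by (metis power2_abs power2_eq_iff abs_minus_cancel)
    moreover have "(\<Prod>j\<in>UNIV. s j) > 0" using spos by (intro prod_pos) auto
    ultimately show ?thesis by simp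
  qed
  have meas: "measure lebesgue ((\<lambda>u. c + A u) ` cball 0 1) = (\<Prod>j\<in>UNIV. s j) * measure lebesgue (ball (0::(real,'n) vec) 1)"
  proof -
    have "(\<lambda>u. c + A u) ` cball 0 1 = (+) c ` (A ` cball 0 1)" by (simp add: image_image)
    hence "measure lebesgue ((\<lambda>u. c + A u) ` cball 0 1) = measure lebesgue (A ` cball 0 1)"
      by (simp add: measure_translation)
    also have "\<dots> = \<bar>det (matrix A)\<bar> * measure lebesgue (cball (0::(real,'n) vec) 1)"
      using lin by (intro measure_linear_image) auto
    also have "measure lebesgue (cball (0::(real,'n) vec) 1) = measure lebesgue (ball (0::(real,'n) vec) 1)"
      using content_cball_conv_ball[of "0::(real,'n) vec" 1] by simp
    finally show ?thesis using detM M_def by simp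
  qed
  define W where "W = (\<chi> i j. X$i$j / s j)"
  have colW: "column j W = (1 / s j) *\<^sub>R column j X" for j unfolding W_def by (simp add: vec_eq_iff column_def)
  have W: "orthogonal_matrix W"
    unfolding orthogonal_matrix_orthonormal_columns norm_eq_1 orthogonal_def colW
    by (simp add: Xo power2_eq_square snz)
  define a where "a i = transpose W *v x i" for i
  have na: "norm (a i) = 1" if "i < m" for i
  proof -
    have W': "orthogonal_matrix (transpose W)" using W by simp
    have "orthogonal_transformation (\<lambda>v. transpose W *v v)"
      unfolding orthogonal_transformation_matrix
      using W' matrix_vector_mul_linear[of "transpose W"] matrix_of_matrix_vector_mul[of "transpose W"] by simp
    thus ?thesis unfolding a_def using nx[OF that] orthogonal_transformation_norm by metis
  qed
  define t where "t = sqrt (2 * ln (2 * real m))"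
  obtain f where fSV: "f \<in> SV" and fb: "\<And>i. i < m \<Longrightarrow> \<bar>\<Sum>j\<in>UNIV. a i $ j * f j\<bar> \<le> t"
    using exists_signs[OF m, of a] na unfolding t_def by auto
  have f2: "(f j)^2 = 1" for j
  proof -
    have "f j = -1 \<or> f j = 1" using fSV unfolding SV_def by (auto simp: PiE_iff)
    thus ?thesis by auto
  qed
  define e where "e = (\<chi> j. f j)"
  define u where "u = W *v e"
  have xu: "x i \<bullet> u = (\<Sum>j\<in>UNIV. a i $ j * f j)" for i
  proof -
    have "x i \<bullet> u = (transpose W *v x i) \<bullet> e" unfolding u_def
      by (simp add: dot_lmul_matrix)
    thus ?thesis unfolding a_def e_def by (simp add: inner_vec_def)
  qed
  have Pb: "\<bar>p \<bullet> u\<bar> \<le> t" if "p \<in> convex hull (x ` {..<m})" for p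
    using hull_abs_bound[OF _ that] fb xu by auto
  define sig where "sig = sqrt (\<Sum>j\<in>UNIV. (s j)^2)"
  have sp: "(\<Sum>j\<in>UNIV. (s j)^2) > 0" using snz by (intro sum_pos) auto
  hence sigpos: "sig > 0" unfolding sig_def by simp
  have sig2: "sig^2 = (\<Sum>j\<in>UNIV. (s j)^2)" unfolding sig_def using sp by simp
  define y where "y = (\<chi> j. f j * s j / sig)"
  define z where "z = Q *v y"
  have nz: "norm z = 1"
  proof -
    have "orthogonal_transformation (\<lambda>v. Q *v v)"
      using Q by (simp add: orthogonal_transformation_matrix matrix_vector_mul_linear)
    hence "norm z = norm y" unfolding z_def using orthogonal_transformation_norm by metis
    also have "norm y = 1"
    proof -
      have "(norm y)^2 = (\<Sum>j\<in>UNIV. (f j * s j / sig)^2)"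
        unfolding power2_norm_eq_inner y_def inner_vec_def by (simp add: power2_eq_square)
      also have "\<dots> = (\<Sum>j\<in>UNIV. (s j)^2) / sig^2"
        by (simp add: power_mult_distrib power_divide f2 sum_divide_distrib)
      also have "\<dots> = 1" using sig2 sp by simp
      finally have "(norm y)^2 = 1" .
      thus ?thesis using norm_ge_zero[of y] power2_eq_1_iff[of "norm y"] by linarith
    qed
    finally show ?thesis .
  qed
  have Az: "A z = (\<Sum>j\<in>UNIV. (y$j) *\<^sub>R column j X)"
    unfolding AM z_def matrix_vector_mul_assoc X_def[symmetric]
    by (simp add: matrix_mult_sum scalar_mult_eq_scaleR)
  have uX: "u = (\<Sum>j\<in>UNIV. (f j / s j) *\<^sub>R column j X)"
    unfolding u_def e_def by (simp add: matrix_mult_sum scalar_mult_eq_scaleR colW)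
  have Azu: "A z \<bullet> u = sig"
  proof -
    have Azc: "A z \<bullet> column l X = y$l * (s l)^2" for l
      unfolding Az by (simp add: inner_sum_left Xo if_distrib cong: if_cong)
    have "A z \<bullet> u = (\<Sum>j\<in>UNIV. (y$j) * (f j / s j) * (s j)^2)"
      unfolding uX by (simp add: inner_sum_right Azc mult.assoc mult.left_commute)
    also have "\<dots> = (\<Sum>j\<in>UNIV. (s j)^2) / sig"
      unfolding y_def using snz f2
      by (simp add: sum_divide_distrib power2_eq_square field_simps)
    also have "\<dots> = sig" unfolding sig2[symmetric] using sigpos by (simp add: power2_eq_square)
    finally show ?thesis .
  qed
  have "c + A z \<in> convex hull (x ` {..<m})" using sub nz by auto
  hence p1: "\<bar>(c + A z) \<bullet> u\<bar> \<le> t" by (rule Pb)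
  have "c + A (- z) \<in> convex hull (x ` {..<m})" using sub nz by auto
  hence p2: "\<bar>(c - A z) \<bullet> u\<bar> \<le> t" using Pb lin by (simp add: linear_neg)
  have "sig \<le> t" using p1 p2 Azu by (simp add: inner_add_left inner_diff_left abs_le_iff)
  hence "sig^2 \<le> t^2" using sigpos by (intro power_mono) auto
  hence ss: "(\<Sum>j\<in>UNIV. (s j)^2) \<le> 2 * ln (2 * real m)"
    using sig2 m unfolding t_def by simp
  have "(\<Prod>j\<in>UNIV. s j) \<le> sqrt ((\<Sum>j\<in>UNIV. (s j)^2) / real CARD('n)) ^ CARD('n)"
    by (rule am_gm_sq[OF spos])
  also have "\<dots> \<le> sqrt (2 * ln (2 * real m) / real CARD('n)) ^ CARD('n)"
    using ss sp by (intro power_mono real_sqrt_le_mono divide_right_mono) auto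
  finally have "(\<Prod>j\<in>UNIV. s j) \<le> sqrt (2 * ln (2 * real m) / real CARD('n)) ^ CARD('n)" .
  thus ?thesis unfolding meas by (intro mult_right_mono) auto
qed

typedef (overloaded) ('a::euclidean_space) bidx = "Basis :: 'a set"
  morphisms rep_b abs_b
  using nonempty_Basis by blast

instance bidx :: (euclidean_space) finite
proof
  have "UNIV = abs_b ` (Basis :: 'a set)" using type_definition.univ[OF type_definition_bidx] .
  thus "finite (UNIV :: 'a bidx set)" by (metis finite_Basis finite_imageI)
qed

instantiation bidx :: (euclidean_space) linorder
begin
definition less_eq_bidx :: "'a bidx \<Rightarrow> 'a bidx \<Rightarrow> bool" where "less_eq_bidx x y \<longleftrightarrow> to_nat x \<le> to_nat y"
definition less_bidx :: "'a bidx \<Rightarrow> 'a bidx \<Rightarrow> bool" where "less_bidx x y \<longleftrightarrow> to_nat x < to_nat y"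
instance by standard (auto simp: less_eq_bidx_def less_bidx_def)
end

instance bidx :: (euclidean_space) wellorder
proof
  fix P :: "'a bidx \<Rightarrow> bool" and a
  assume step: "\<And>x. (\<And>y. y < x \<Longrightarrow> P y) \<Longrightarrow> P x"
  show "P a"
  proof (induction "to_nat a" arbitrary: a rule: less_induct)
    case less
    show ?case by (rule step) (use less in \<open>auto simp: less_bidx_def\<close>)
  qed
qed

lemma rep_b_Basis: "rep_b i \<in> Basis" using rep_b by blast
lemma rep_b_inj: "inj rep_b" by (metis injI rep_b_inject)
lemma rep_b_range: "range rep_b = Basis" using type_definition.Rep_range[OF type_definition_bidx] .

lemma rep_b_inner: "rep_b i \<bullet> rep_b j = (if i = j then 1 else 0)"
  using rep_b_Basis[of i] rep_b_Basis[of j] rep_b_inject[of i j] by (simp add: inner_Basis)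

lemma sum_rep_b: "(\<Sum>i\<in>UNIV. g (rep_b i)) = (\<Sum>b\<in>(Basis::'a::euclidean_space set). g b)"
proof -
  have "(\<Sum>b\<in>(Basis::'a set). g b) = (\<Sum>b\<in>range (rep_b :: 'a bidx \<Rightarrow> 'a). g b)" by (simp add: rep_b_range)
  also have "\<dots> = (\<Sum>i\<in>UNIV. g (rep_b i))" using sum.reindex[of rep_b UNIV g] rep_b_inj by (simp add: o_def)
  finally show ?thesis by simp
qed

lemma prod_rep_b: "(\<Prod>i\<in>UNIV. g (rep_b i)) = (\<Prod>b\<in>(Basis::'a::euclidean_space set). g b)"
proof -
  have "(\<Prod>b\<in>(Basis::'a set). g b) = (\<Prod>b\<in>range (rep_b :: 'a bidx \<Rightarrow> 'a). g b)" by (simp add: rep_b_range)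
  also have "\<dots> = (\<Prod>i\<in>UNIV. g (rep_b i))" using prod.reindex[of rep_b UNIV g] rep_b_inj by (simp add: o_def)
  finally show ?thesis by simp
qed

lemma card_bidx: "CARD('a::euclidean_space bidx) = DIM('a)"
proof -
  have "card (UNIV :: 'a bidx set) = card (range (rep_b :: 'a bidx \<Rightarrow> 'a))"
    by (metis card_image rep_b_inj)
  thus ?thesis by (simp add: rep_b_range)
qed

definition phi :: "'a::euclidean_space \<Rightarrow> real^('a bidx)" where
  "phi x = (\<chi> i. x \<bullet> rep_b i)"
definition psi :: "real^('a::euclidean_space bidx) \<Rightarrow> 'a" where
  "psi y = (\<Sum>i\<in>UNIV. (y$i) *\<^sub>R rep_b i)"

lemma psi_inner: "psi y \<bullet> rep_b j = y $ j"
proof -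
  have "psi y \<bullet> rep_b j = (\<Sum>i\<in>UNIV. y$i * (rep_b i \<bullet> rep_b j))"
    unfolding psi_def by (simp add: inner_sum_left)
  also have "\<dots> = (\<Sum>i\<in>UNIV. if i = j then y$i else 0)"
    by (intro sum.cong refl) (simp add: rep_b_inner)
  finally show ?thesis by simp
qed

lemma phi_psi [simp]: "phi (psi y) = y"
  by (simp add: phi_def psi_inner vec_eq_iff)

lemma psi_phi [simp]: "psi (phi x) = x"
proof -
  have "psi (phi x) = (\<Sum>i\<in>UNIV. (x \<bullet> rep_b i) *\<^sub>R rep_b i)" by (simp add: psi_def phi_def)
  also have "\<dots> = (\<Sum>b\<in>Basis. (x \<bullet> b) *\<^sub>R b)" by (rule sum_rep_b)
  also have "\<dots> = x" by (rule euclidean_representation)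
  finally show ?thesis .
qed

lemma linear_phi: "linear phi"
  unfolding phi_def by (intro linearI) (auto simp: vec_eq_iff inner_add_left)

lemma linear_psi: "linear psi"
  unfolding psi_def by (intro linearI) (auto simp: scaleR_add_left sum.distrib scaleR_sum_right)

lemma inner_phi: "phi x \<bullet> phi y = x \<bullet> y"
proof -
  have "phi x \<bullet> phi y = (\<Sum>i\<in>UNIV. (x \<bullet> rep_b i) * (y \<bullet> rep_b i))"
    by (simp add: phi_def inner_vec_def)
  also have "\<dots> = (\<Sum>b\<in>Basis. (x \<bullet> b) * (y \<bullet> b))" by (rule sum_rep_b)
  also have "\<dots> = x \<bullet> y" by (rule euclidean_inner[symmetric])
  finally show ?thesis .
qed

lemma norm_phi [simp]: "norm (phi x) = norm x"
  by (simp add: norm_eq_sqrt_inner inner_phi)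

lemma norm_psi [simp]: "norm (psi y) = norm y"
  by (metis norm_phi phi_psi)

lemma phi_inj: "inj phi" by (metis injI psi_phi)
lemma psi_inj: "inj psi" by (metis injI phi_psi)

lemma cont_phi: "continuous_on S phi"
  using linear_phi linear_conv_bounded_linear linear_continuous_on by blast
lemma cont_psi: "continuous_on S psi"
  using linear_psi linear_conv_bounded_linear linear_continuous_on by blast

lemma phi_image_vimage: "phi ` S = psi -` S"
  by (auto simp: image_iff) (metis phi_psi)

lemma Basis_vec_axis: "(Basis :: (real^'n) set) = range (\<lambda>i. axis i 1)"
  by (auto simp: Basis_vec_def)

lemma distr_phi: "distr lborel borel (phi :: 'a::euclidean_space \<Rightarrow> _) = lborel"
proof (rule lborel_eqI[symmetric])
  fix l u :: "real^('a bidx)"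
  assume le: "\<And>b. b \<in> Basis \<Longrightarrow> l \<bullet> b \<le> u \<bullet> b"
  have meas: "phi \<in> borel_measurable borel"
    by (intro borel_measurable_continuous_onI cont_phi)
  have pre: "phi -` box l u = box (psi l) (psi u)"
    by (auto simp: mem_box_cart mem_box phi_def psi_inner rep_b_range[symmetric])
  have le2: "\<forall>b\<in>Basis. psi l \<bullet> b \<le> psi u \<bullet> b"
  proof
    fix b :: 'a assume "b \<in> Basis"
    then obtain i where "b = rep_b i" using rep_b_range by blast
    with le[of "axis i 1"] show "psi l \<bullet> b \<le> psi u \<bullet> b" by (simp add: psi_inner inner_axis)
  qed
  have "emeasure (distr lborel borel phi) (box l u) = emeasure lborel (phi -` box l u)"
    using meas by (subst emeasure_distr) auto
  also have "\<dots> = (\<Prod>b\<in>Basis. (psi u - psi l) \<bullet> b)"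
    unfolding pre using le2 by (simp add: emeasure_lborel_box_eq)
  also have "(\<Prod>b\<in>Basis. (psi u - psi l) \<bullet> b) = (\<Prod>i\<in>UNIV. (psi u - psi l) \<bullet> rep_b i)"
    by (rule prod_rep_b[symmetric])
  also have "\<dots> = (\<Prod>i\<in>UNIV. (u - l) \<bullet> axis i 1)"
    by (simp add: inner_diff_left psi_inner inner_axis)
  also have "\<dots> = (\<Prod>b\<in>Basis. (u - l) \<bullet> b)"
    unfolding Basis_vec_axis by (subst prod.reindex) (auto simp: inj_def axis_eq_axis)
  finally show "emeasure (distr lborel borel phi) (box l u) = (\<Prod>b\<in>Basis. (u - l) \<bullet> b)" .
qed simp

lemma measure_phi:
  fixes S :: "'a::euclidean_space set"
  assumes S: "S \<in> sets borel"
  shows "measure lebesgue (phi ` S) = measure lebesgue S"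
proof -
  have meas: "psi \<in> borel_measurable borel"
    by (intro borel_measurable_continuous_onI cont_psi)
  have pS: "phi ` S \<in> sets borel" unfolding phi_image_vimage
    using measurable_sets_borel[OF meas S] by simp
  have "emeasure lborel (phi ` S) = emeasure (distr lborel borel (phi :: 'a \<Rightarrow> _)) (phi ` S)"
    by (simp add: distr_phi)
  also have "\<dots> = emeasure lborel (phi -` (phi ` S))"
    using pS by (subst emeasure_distr) (auto intro: borel_measurable_continuous_onI cont_phi)
  also have "phi -` (phi ` S) = S" using phi_inj by (auto simp: inj_def)
  finally have "emeasure lborel (phi ` S) = emeasure lborel S" .
  hence "measure lborel (phi ` S) = measure lborel S" by (simp add: measure_def)
  thus ?thesis using S pS by simp
qed

lemma cball_psi: "cball (0::'a::euclidean_space) r = psi ` cball 0 r"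
proof
  show "cball (0::'a) r \<subseteq> psi ` cball 0 r"
  proof
    fix w :: 'a assume "w \<in> cball 0 r"
    hence "phi w \<in> cball 0 r" by simp
    thus "w \<in> psi ` cball 0 r" by (metis image_eqI psi_phi)
  qed
  show "psi ` cball 0 r \<subseteq> cball (0::'a) r" by auto
qed

lemma ball_phi: "phi ` ball (0::'a::euclidean_space) r = ball 0 r"
proof
  show "phi ` ball (0::'a) r \<subseteq> ball 0 r" by auto
  show "ball 0 r \<subseteq> phi ` ball (0::'a) r"
  proof
    fix v :: "real^('a bidx)" assume "v \<in> ball 0 r"
    hence "psi v \<in> ball (0::'a) r" by simp
    thus "v \<in> phi ` ball (0::'a) r" by (metis image_eqI phi_psi)
  qed
qed

theorem lemma5:
  fixes x :: "nat \<Rightarrow> 'a::euclidean_space" and m :: nat and E :: "'a set"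
  assumes "m \<ge> 1"
    and "\<And>i. i < m \<Longrightarrow> norm (x i) = 1"
    and "max_vol_ellipsoid (convex hull (x ` {..<m})) E"
  shows "measure lebesgue E \<le>
    2 * sqrt (2 * exp 1) * (sqrt (2 * ln (2 * real m) / real DIM('a))) ^ DIM('a)
      * measure lebesgue (ball (0::'a) 1)"
proof -
  from assms(3) have ell: "is_ellipsoid E" and sub: "E \<subseteq> convex hull (x ` {..<m})"
    unfolding max_vol_ellipsoid_def by auto
  then obtain c and A :: "'a \<Rightarrow> 'a" where lin: "linear A" and injA: "inj A"
    and Edef: "E = (\<lambda>u. c + A u) ` cball 0 1"
    unfolding is_ellipsoid_def by auto
  define A' where "A' = (\<lambda>v. phi (A (psi v)))"
  define c' where "c' = phi c"
  define x' where "x' i = phi (x i)" for i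
  have linA': "linear A'"
  proof -
    have "linear (phi \<circ> (A \<circ> psi))"
      by (intro linear_compose linear_psi lin linear_phi)
    thus ?thesis unfolding A'_def by (simp add: o_def)
  qed
  have injA': "inj A'"
    unfolding A'_def by (intro injI) (metis injD phi_inj injA psi_inj)
  have imgE: "phi ` E = (\<lambda>u. c' + A' u) ` cball 0 1"
  proof -
    have "phi ` E = (\<lambda>u. phi c + phi (A u)) ` cball 0 1"
    proof -
      have padd: "phi (a + b) = phi a + phi b" for a b :: 'a by (simp add: phi_def vec_eq_iff inner_add_left)
      show ?thesis unfolding Edef image_image by (simp add: padd)
    qed
    also have "\<dots> = (\<lambda>u. phi c + phi (A u)) ` psi ` cball 0 1"
      by (subst cball_psi) simp
    also have "\<dots> = (\<lambda>u. c' + A' u) ` cball 0 1"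
      unfolding image_image c'_def A'_def by simp
    finally show ?thesis .
  qed
  have subP: "phi ` E \<subseteq> convex hull (x' ` {..<m})"
  proof -
    have "phi ` E \<subseteq> phi ` (convex hull (x ` {..<m}))" using sub by auto
    also have "\<dots> = convex hull (phi ` x ` {..<m})"
      by (rule convex_hull_linear_image[OF linear_phi])
    also have "phi ` x ` {..<m} = x' ` {..<m}" unfolding x'_def by auto
    finally show ?thesis .
  qed
  have nx': "norm (x' i) = 1" if "i < m" for i using assms(2)[OF that] unfolding x'_def by simp
  have main: "measure lebesgue ((\<lambda>u. c' + A' u) ` cball 0 1)
    \<le> sqrt (2 * ln (2 * real m) / real CARD('a bidx)) ^ CARD('a bidx) * measure lebesgue (ball (0::real^('a bidx)) 1)"
    by (rule core[OF assms(1) nx' linA' injA' subP[unfolded imgE]])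
  have Ecomp: "compact E"
  proof -
    have "continuous_on (cball 0 1) (\<lambda>u. c + A u)"
      using lin linear_conv_bounded_linear linear_continuous_on by (intro continuous_intros) blast
    thus ?thesis unfolding Edef by (intro compact_continuous_image) auto
  qed
  have mE: "measure lebesgue E = measure lebesgue (phi ` E)"
    using Ecomp by (intro measure_phi[symmetric] borel_closed compact_imp_closed)
  have mB: "measure lebesgue (ball (0::real^('a bidx)) 1) = measure lebesgue (ball (0::'a) 1)"
  proof -
    have "ball (0::'a) 1 \<in> sets borel" by simp
    from measure_phi[OF this] show ?thesis unfolding ball_phi .
  qed
  have bound: "measure lebesgue E \<le> (sqrt (2 * ln (2 * real m) / real DIM('a))) ^ DIM('a) * measure lebesgue (ball (0::'a) 1)"
    using main unfolding mE imgE mB card_bidx .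
  have one: "1 \<le> 2 * sqrt (2 * exp 1)"
  proof -
    have "1 \<le> exp (1::real)" by simp
    hence "1 \<le> 2 * exp (1::real)" by linarith
    hence "sqrt 1 \<le> sqrt (2 * exp (1::real))" by (rule real_sqrt_le_mono)
    hence "1 \<le> sqrt (2 * exp (1::real))" by simp
    thus ?thesis by linarith
  qed
  have l0: "0 \<le> ln (2 * real m)" using assms(1) by simp
  have nn: "0 \<le> (sqrt (2 * ln (2 * real m) / real DIM('a))) ^ DIM('a) * measure lebesgue (ball (0::'a) 1)"
    by (intro mult_nonneg_nonneg zero_le_power) (simp_all add: l0 measure_nonneg)
  show ?thesis
    using bound mult_right_mono[OF one nn] by (simp add: mult.assoc)
qed

end
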